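(* Let $a$ be real with $|a|>1$, let $x$ be the real solution of $x^{5}+x=a$, and put $y=x/a$. Define the numbers $c_k$ ($k\ge 1$) by $c_1=\tfrac15$ and $c_{k+1}=\dfrac{5k-1}{5(k+1)}\,c_k$ (so that $(1-y)^{1/5}=1-\sum_{k\ge1}c_k y^k$ for $|y|<1$). Define $$K_{0}=1+\sum_{m=1}^{\infty}\frac{(-1)^{m}}{a^{4m}}\sum_{n=0}^{m-1}(-1)^{n}\binom{m-1}{n}c_{4m+n+1},$$ $$K_{1}=-|a|^{4/5}+\sum_{m=1}^{\infty}\frac{(-1)^{m}}{a^{4(m-1)}}\sum_{n=0}^{m-1}(-1)^{n}\binom{m-1}{n}c_{4m+n-3},$$ and for $j=2,3,4$ $$K_{j}=\sum_{m=1}^{\infty}\frac{(-1)^{m}}{a^{4(m-1)}}\sum_{n=0}^{m-1}(-1)^{n}\binom{m-1}{n}c_{4m+n-4+j}.$$ Then these series converge and $y=x/a$ satisfies the quartic equation $$K_{4}y^{4}+K_{3}y^{3}+K_{2}y^{2}+K_{1}y+K_{0}=0 .$$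
   Context: The real solution $x$ of $x^5+x=a$ is unique since $x\mapsto x^5+x$ is strictly increasing; it satisfies $0<x/a<1$. Here $|a|^{4/5}$ denotes the positive real value. The quantities $K_0,\dots,K_4$ (called "ultraradicals" in $a$) are series in $a^{-4}$ obtained by expanding $y=|a|^{-4/5}(1-y)^{1/5}$ binomially and repeatedly replacing $y^{5}$ by $a^{-4}(1-y)$ to eliminate all powers $y^k$, $k\ge5$. *)

theory Defs
  imports Complex_Main
begin

text \<open>Coefficients of (1-y) powr (1/5) = 1 - sum c_k y^k: c_1 = 1/5,
  c_(k+1) = (5k-1)/(5(k+1)) c_k.  The value at index 0 is never used.\<close>
fun ucoef :: "nat \<Rightarrow> real" where
  "ucoef 0 = 0"
| "ucoef (Suc 0) = 1/5"
| "ucoef (Suc (Suc k)) = (5 * real (Suc k) - 1) / (5 * real (Suc (Suc k))) * ucoef (Suc k)"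

definition K0_term :: "real \<Rightarrow> nat \<Rightarrow> real" where
  "K0_term a m = (-1)^m / a^(4*m) *
     (\<Sum>n<m. (-1)^n * real ((m-1) choose n) * ucoef (4*m + n + 1))"

text \<open>m-th term (m \<ge> 1) of the series for K_j, j = 1,2,3,4
  (for j = 1 the index 4m+n-3 = 4m+n-4+j).\<close>
definition Kj_term :: "real \<Rightarrow> nat \<Rightarrow> nat \<Rightarrow> real" where
  "Kj_term a j m = (-1)^m / a^(4*(m-1)) *
     (\<Sum>n<m. (-1)^n * real ((m-1) choose n) * ucoef (4*m + n + j - 4))"

end

theory Submission
  imports Defs "HOL-Analysis.Generalised_Binomial_Theorem"
begin

lemma ucoef_gb: "ucoef (Suc k) = (-1)^k * ((1/5::real) gchoose Suc k)"
proof (induction k)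
  case 0 then show ?case by simp
next
  case (Suc k)
  have g: "real (Suc (Suc k)) * ((1/5::real) gchoose Suc (Suc k)) = (1/5 - real (Suc k)) * ((1/5::real) gchoose Suc k)"
    using gbinomial_mult_1[of "1/5::real" "Suc k"] by (simp add: algebra_simps)
  have "ucoef (Suc (Suc k)) = (5 * real (Suc k) - 1) / (5 * real (Suc (Suc k))) * ((-1)^k * ((1/5::real) gchoose Suc k))"
    using Suc by simp
  also have "\<dots> = (-1)^(Suc k) * ((1/5 - real (Suc k)) * ((1/5::real) gchoose Suc k)) / real (Suc (Suc k))"
    by (simp add: field_simps)
  also have "\<dots> = (-1)^(Suc k) * ((1/5::real) gchoose Suc (Suc k))"
  proof -
    have g': "((1/5::real) gchoose Suc (Suc k)) = (1/5 - real (Suc k)) * ((1/5::real) gchoose Suc k) / real (Suc (Suc k))"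
      using g by (simp add: field_simps del: of_nat_Suc)
    show ?thesis unfolding g' by simp
  qed
  finally show ?case .
qed

lemma fdiff:
  fixes f :: "nat \<Rightarrow> real"
  shows "(\<Sum>n\<le>Suc m. (-1)^n * real (Suc m choose n) * f n)
       = (\<Sum>n\<le>m. (-1)^n * real (m choose n) * (f n - f (Suc n)))"
proof -
  have L: "(\<Sum>n\<le>Suc m. (-1)^n * real (Suc m choose n) * f n)
     = f 0 + (\<Sum>n\<le>m. (-1)^(Suc n) * (real (m choose n) + real (m choose Suc n)) * f (Suc n))"
    by (subst sum.atMost_Suc_shift) simp
  have R1: "(\<Sum>n\<le>m. (-1)^n * real (m choose n) * f n) = f 0 + (\<Sum>n\<le>m. (-1)^(Suc n) * real (m choose Suc n) * f (Suc n))"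
  proof -
    have "(\<Sum>n\<le>Suc m. (-1)^n * real (m choose n) * f n) = f 0 + (\<Sum>n\<le>m. (-1)^(Suc n) * real (m choose Suc n) * f (Suc n))"
      by (subst sum.atMost_Suc_shift) simp
    moreover have "(\<Sum>n\<le>Suc m. (-1)^n * real (m choose n) * f n) = (\<Sum>n\<le>m. (-1)^n * real (m choose n) * f n)"
      by simp
    ultimately show ?thesis by simp
  qed
  have "(\<Sum>n\<le>m. (-1)^n * real (m choose n) * (f n - f (Suc n)))
     = (\<Sum>n\<le>m. (-1)^n * real (m choose n) * f n) + (\<Sum>n\<le>m. (-1)^(Suc n) * real (m choose n) * f (Suc n))"
    by (simp add: sum.distrib[symmetric] algebra_simps)
  also have "\<dots> = f 0 + ((\<Sum>n\<le>m. (-1)^(Suc n) * real (m choose Suc n) * f (Suc n)) + (\<Sum>n\<le>m. (-1)^(Suc n) * real (m choose n) * f (Suc n)))"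
    by (simp only: R1 add.assoc)
  also have "\<dots> = f 0 + (\<Sum>n\<le>m. (-1)^(Suc n) * (real (m choose n) + real (m choose Suc n)) * f (Suc n))"
    by (simp only: sum.distrib[symmetric]) (simp add: algebra_simps)
  finally show ?thesis using L by simp
qed

lemma dsum:
  assumes "s \<ge> 1"
  shows "(\<Sum>n<Suc m. (-1)^n * real (m choose n) * ucoef (s+n)) = (-1)^(s-1) * ((real m + 1/5) gchoose (s+m))"
  using assms
proof (induction m arbitrary: s)
  case 0
  then obtain k where "s = Suc k" by (cases s) auto
  then show ?case by (simp add: ucoef_gb)
next
  case (Suc m)
  have "(\<Sum>n<Suc (Suc m). (-1)^n * real (Suc m choose n) * ucoef (s+n))
      = (\<Sum>n\<le>m. (-1)^n * real (m choose n) * (ucoef (s+n) - ucoef (Suc s + n)))"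
    unfolding lessThan_Suc_atMost using fdiff[where f="\<lambda>n. ucoef (s+n)" and m=m] by simp
  also have "\<dots> = (\<Sum>n<Suc m. (-1)^n * real (m choose n) * ucoef (s+n)) - (\<Sum>n<Suc m. (-1)^n * real (m choose n) * ucoef (Suc s+n))"
    unfolding lessThan_Suc_atMost by (simp add: sum_subtractf[symmetric] algebra_simps)
  also have "\<dots> = (-1)^(s-1) * ((real m + 1/5) gchoose (s+m)) - (-1)^(Suc s - 1) * ((real m + 1/5) gchoose (Suc s+m))"
  proof -
    have h1: "(\<Sum>n<Suc m. (-1)^n * real (m choose n) * ucoef (s+n)) = (-1)^(s-1) * ((real m + 1/5) gchoose (s+m))"
      by (rule Suc.IH) (rule Suc.prems)
    have h2: "(\<Sum>n<Suc m. (-1)^n * real (m choose n) * ucoef (Suc s+n)) = (-1)^(Suc s-1) * ((real m + 1/5) gchoose (Suc s+m))"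
      by (rule Suc.IH) simp
    show ?thesis by (simp only: h1 h2)
  qed
  also have "\<dots> = (-1)^(s-1) * (((real m + 1/5) gchoose (s+m)) + ((real m + 1/5) gchoose Suc (s+m)))"
    using Suc.prems by (cases s) (auto simp: algebra_simps)
  also have "\<dots> = (-1)^(s-1) * ((real (Suc m) + 1/5) gchoose (s + Suc m))"
    using gbinomial_Suc_Suc[of "real m + 1/5" "s+m"] by (simp add: algebra_simps)
  finally show ?case .
qed

lemma gb_rec: "((a::real) gchoose Suc k) = (a - real k) / real (Suc k) * (a gchoose k)"
proof -
  have "real (Suc k) * (a gchoose Suc k) = (a - real k) * (a gchoose k)"
    using gbinomial_mult_1[of a k] by (simp add: algebra_simps)
  then show ?thesis by (simp add: field_simps del: of_nat_Suc)
qed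

lemma gb_le_choose:
  fixes \<alpha> :: real
  assumes "real n - 1 \<le> \<alpha>" "\<alpha> \<le> real n"
  shows "k \<le> n \<Longrightarrow> \<bar>\<alpha> gchoose k\<bar> \<le> real n gchoose k"
proof (induction k)
  case 0 then show ?case by simp
next
  case (Suc k)
  have k: "real k + 1 \<le> real n" using Suc.prems by simp
  have nn: "0 \<le> real n gchoose k" by (simp add: binomial_gbinomial[symmetric])
  have "\<bar>\<alpha> gchoose Suc k\<bar> = \<bar>\<alpha> - real k\<bar> / real (Suc k) * \<bar>\<alpha> gchoose k\<bar>"
    by (simp add: gb_rec abs_mult)
  also have "\<dots> \<le> (real n - real k) / real (Suc k) * (real n gchoose k)"
  proof (rule mult_mono)
    show "\<bar>\<alpha> - real k\<bar> / real (Suc k) \<le> (real n - real k) / real (Suc k)"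
      using assms k by (intro divide_right_mono) auto
    show "\<bar>\<alpha> gchoose k\<bar> \<le> real n gchoose k" using Suc by simp
  qed (use k nn in auto)
  also have "\<dots> = real n gchoose Suc k" by (simp add: gb_rec)
  finally show ?case .
qed

lemma gb_le_1:
  fixes \<alpha> :: real
  assumes "real n - 1 \<le> \<alpha>" "\<alpha> \<le> real n" "0 \<le> \<alpha>" "n \<le> k"
  shows "\<bar>\<alpha> gchoose k\<bar> \<le> 1"
proof -
  obtain d where d: "k = n + d" using assms(4) by (metis le_add_diff_inverse)
  have "\<bar>\<alpha> gchoose (n + d)\<bar> \<le> 1"
  proof (induction d)
    case 0
    have "\<bar>\<alpha> gchoose n\<bar> \<le> real n gchoose n" using gb_le_choose[OF assms(1,2)] by simp
    then show ?case by (simp add: binomial_gbinomial[symmetric])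
  next
    case (Suc d)
    have "\<bar>\<alpha> gchoose Suc (n+d)\<bar> = \<bar>\<alpha> - real (n+d)\<bar> / real (Suc (n+d)) * \<bar>\<alpha> gchoose (n+d)\<bar>"
      by (simp add: gb_rec abs_mult)
    also have "\<dots> \<le> 1 * 1"
    proof (rule mult_mono)
      show "\<bar>\<alpha> - real (n+d)\<bar> / real (Suc (n+d)) \<le> 1"
        using assms by (auto simp: field_simps)
    qed (use Suc in auto)
    finally show ?case by simp
  qed
  then show ?thesis using d by simp
qed

lemma Kj_closed:
  assumes "1 \<le> j"
  shows "Kj_term a j (Suc t) = (-1)^(t+j) / a^(4*t) * ((real t + 1/5) gchoose (5*t+j))"
proof -
  have idx: "\<And>n. 4 * Suc t + n + j - 4 = (4*t+j) + n" by simp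
  have "(\<Sum>n<Suc t. (-1)^n * real ((Suc t - 1) choose n) * ucoef (4 * Suc t + n + j - 4))
      = (\<Sum>n<Suc t. (-1)^n * real (t choose n) * ucoef ((4*t+j) + n))"
    by (simp only: idx diff_Suc_1)
  also have "\<dots> = (-1)^(4*t+j-1) * ((real t + 1/5) gchoose (4*t+j+t))"
    by (rule dsum) (use assms in simp)
  finally have S: "(\<Sum>n<Suc t. (-1)^n * real ((Suc t - 1) choose n) * ucoef (4 * Suc t + n + j - 4))
      = (-1)^(4*t+j-1) * ((real t + 1/5) gchoose (5*t+j))" by (simp add: add.commute add.left_commute)
  have e: "Suc t + (4*t+j-1) = (t+j) + 2*(2*t)" using assms by simp
  have sg: "(-1::real)^(Suc t) * (-1)^(4*t+j-1) = (-1)^(t+j)"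
    by (simp only: power_add[symmetric] e) (simp add: power_add power_mult)
  show ?thesis unfolding Kj_term_def S using sg
    by (metis (no_types, lifting) diff_Suc_1 mult.assoc times_divide_eq_left)
qed

lemma K0_closed:
  shows "K0_term a (Suc t) = (-1)^(Suc t) / a^(4*Suc t) * ((real t + 1/5) gchoose (5*t+5))"
proof -
  have idx: "\<And>n. 4 * Suc t + n + 1 = (4*t+5) + n" by simp
  have "(\<Sum>n<Suc t. (-1)^n * real ((Suc t - 1) choose n) * ucoef (4 * Suc t + n + 1))
      = (\<Sum>n<Suc t. (-1)^n * real (t choose n) * ucoef ((4*t+5) + n))"
    by (simp only: idx diff_Suc_1)
  also have "\<dots> = (-1)^(4*t+5-1) * ((real t + 1/5) gchoose (4*t+5+t))"
    by (rule dsum) simp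
  finally have S: "(\<Sum>n<Suc t. (-1)^n * real ((Suc t - 1) choose n) * ucoef (4 * Suc t + n + 1))
      = ((real t + 1/5) gchoose (5*t+5))"
    by (simp add: power_mult add.commute add.left_commute)
  show ?thesis unfolding K0_term_def S by simp
qed

lemma Kj_bound:
  assumes "1 \<le> j" "a \<noteq> 0"
  shows "\<bar>Kj_term a j (Suc t)\<bar> \<le> (1/a^4)^t"
proof -
  have "\<bar>(real t + 1/5) gchoose (5*t+j)\<bar> \<le> 1"
    by (rule gb_le_1[where n="Suc t"]) (use assms in auto)
  moreover have "0 < \<bar>a\<bar>^(4*t)" using assms by simp
  ultimately have "\<bar>(-1)^(t+j) / a^(4*t) * ((real t + 1/5) gchoose (5*t+j))\<bar> \<le> 1 / \<bar>a\<bar>^(4*t)"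
    by (simp add: abs_mult power_abs abs_divide divide_right_mono)
  also have "1 / \<bar>a\<bar>^(4*t) = (1/a^4)^t"
    by (simp add: power_mult power_one_over power_even_abs_numeral)
  finally show ?thesis using Kj_closed[OF assms(1)] by simp
qed

lemma K0_bound:
  assumes "a \<noteq> 0"
  shows "\<bar>K0_term a (Suc t)\<bar> \<le> (1/a^4)^(Suc t)"
proof -
  have "\<bar>(real t + 1/5) gchoose (5*t+5)\<bar> \<le> 1"
    by (rule gb_le_1[where n="Suc t"]) (use assms in auto)
  moreover have "0 < \<bar>a\<bar>^(4*Suc t)" using assms by simp
  ultimately have "\<bar>(-1)^(Suc t) / a^(4*Suc t) * ((real t + 1/5) gchoose (5*t+5))\<bar> \<le> 1 / \<bar>a\<bar>^(4*Suc t)"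
    by (simp add: abs_mult power_abs abs_divide divide_right_mono)
  also have "1 / \<bar>a\<bar>^(4*Suc t) = (1/a^4)^(Suc t)"
  proof -
    have "even (4*Suc t)" by simp
    then have "\<bar>a\<bar>^(4*Suc t) = a^(4*Suc t)" by (rule power_even_abs)
    then show ?thesis by (simp only: power_mult power_one_over)
  qed
  finally show ?thesis using K0_closed by simp
qed

lemma summable_Kj:
  assumes "1 \<le> j" "1 < \<bar>a\<bar>"
  shows "summable (\<lambda>t. Kj_term a j (Suc t))"
proof (rule summable_comparison_test')
  have "1 < a^4" using assms(2) by (metis one_less_power power_abs power_even_abs_numeral even_numeral zero_less_numeral)
  then have "\<bar>1/a^4\<bar> < 1" by (simp add: divide_less_eq)
  then show "summable (\<lambda>t. (1/a^4)^t)" using summable_geometric[of "1/a^4"] by simp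
  show "\<And>t. 0 \<le> t \<Longrightarrow> norm (Kj_term a j (Suc t)) \<le> (1/a^4)^t"
    using Kj_bound[OF assms(1)] assms(2) by force
qed

lemma summable_K0:
  assumes "1 < \<bar>a\<bar>"
  shows "summable (\<lambda>t. K0_term a (Suc t))"
proof (rule summable_comparison_test')
  have "1 < a^4" using assms by (metis one_less_power power_abs power_even_abs_numeral even_numeral zero_less_numeral)
  then have "\<bar>1/a^4\<bar> < 1" by (simp add: divide_less_eq)
  then have "summable (\<lambda>t. (1/a^4)^t)" using summable_geometric[of "1/a^4"] by simp
  then show "summable (\<lambda>t. (1/a^4)^(Suc t))" by (subst summable_Suc_iff)
  show "\<And>t. 0 \<le> t \<Longrightarrow> norm (K0_term a (Suc t)) \<le> (1/a^4)^(Suc t)"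
    using K0_bound assms by force
qed

lemma telescope:
  fixes a y :: real
  assumes a: "1 < \<bar>a\<bar>" and y0: "0 < y" and y1: "y < 1" and yb: "y^5 = (1/a^4)*(1-y)"
  shows "(\<lambda>t. y * Kj_term a 1 (Suc t) + y^2 * Kj_term a 2 (Suc t) + y^3 * Kj_term a 3 (Suc t)
              + y^4 * Kj_term a 4 (Suc t) + K0_term a (Suc t)) sums ((1-y) powr (1/5) - 1)"
proof -
  define q where "q = 1/(1-y)"
  define u where "u t k = ((real t + 1/5) gchoose k) * (-y)^k" for t k
  define S where "S t = y * Kj_term a 1 (Suc t) + y^2 * Kj_term a 2 (Suc t) + y^3 * Kj_term a 3 (Suc t)
              + y^4 * Kj_term a 4 (Suc t) + K0_term a (Suc t)" for t
  have a0: "a \<noteq> 0" using a by auto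
  have q1: "q * (1-y) = 1" using y1 by (simp add: q_def)
  have b_eq: "1/a^4 = q * y^5" using yb y1 by (simp add: q_def field_simps)
  have pa: "1/a^(4*t) = q^t * y^(5*t)" for t
  proof -
    have "1/a^(4*t) = (1/a^4)^t" by (simp add: power_mult power_one_over)
    then show ?thesis by (simp add: b_eq power_mult_distrib power_mult)
  qed
  have link_j: "y^j * Kj_term a j (Suc t) = q^t * u t (5*t+j)" if j: "1 \<le> j" for j t
  proof -
    have e: "5*t+j = (t+j) + 2*(2*t)" by simp
    have sg: "(-1::real)^(5*t+j) = (-1)^(t+j)" by (simp only: e power_add power_mult) simp
    have "y^j * Kj_term a j (Suc t) = y^j * ((-1)^(t+j) * (1/a^(4*t)) * ((real t + 1/5) gchoose (5*t+j)))"
      using Kj_closed[OF j, of a t] by simp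
    also have "\<dots> = q^t * (((real t + 1/5) gchoose (5*t+j)) * ((-1)^(5*t+j) * y^(5*t+j)))"
      unfolding pa sg by (simp add: power_add algebra_simps)
    also have "\<dots> = q^t * u t (5*t+j)" by (simp add: u_def power_minus[of y])
    finally show ?thesis .
  qed
  have link_0: "K0_term a (Suc t) = q^(Suc t) * u t (5*t+5)" for t
  proof -
    have e: "5*t+5 = Suc t + 2*(2*t+2)" by simp
    have sg: "(-1::real)^(5*t+5) = (-1)^(Suc t)" by (simp only: e power_add power_mult) simp
    have e2: "5 * Suc t = 5*t+5" by simp
    have "K0_term a (Suc t) = (-1)^(Suc t) * (1/a^(4*Suc t)) * ((real t + 1/5) gchoose (5*t+5))"
      using K0_closed[of a t] by simp
    also have "\<dots> = q^(Suc t) * (((real t + 1/5) gchoose (5*t+5)) * ((-1)^(5*t+5) * y^(5*t+5)))"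
      unfolding pa sg e2 by (simp add: algebra_simps)
    also have "\<dots> = q^(Suc t) * u t (5*t+5)" by (simp add: u_def power_minus[of y])
    finally show ?thesis .
  qed
  have usum: "(u t) sums ((1-y) powr (real t + 1/5))" for t
  proof -
    have "u t = (\<lambda>n. ((real t + 1/5) gchoose n) * (-y)^n)" by (rule ext) (simp add: u_def)
    then show ?thesis using gen_binomial_real[of "-y" "real t + 1/5"] y0 y1 by simp
  qed
  have usm: "summable (\<lambda>k. u t (k + c))" for t c
    using usum[of t] by (simp add: sums_iff)
  have ubound: "\<bar>u t k\<bar> \<le> y^k" if "t+1 \<le> k" for t k
  proof -
    have "\<bar>(real t + 1/5) gchoose k\<bar> \<le> 1"
      by (rule gb_le_1[where n="Suc t"]) (use that in auto)
    then show ?thesis using y0 by (simp add: u_def abs_mult power_abs mult_left_le_one_le)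
  qed
  define T where "T t = (\<Sum>k. u t (k + (5*t+6)))" for t
  define E where "E t = q^t * (\<Sum>k. u t (k + (5*t+1)))" for t
  have E_split: "E t = q^t * (u t (5*t+1) + u t (5*t+2) + u t (5*t+3) + u t (5*t+4) + u t (5*t+5) + T t)" for t
  proof -
    have "(\<Sum>k. u t (k + (5*t+1))) = (\<Sum>k. u t (k + 5 + (5*t+1))) + (\<Sum>i<5. u t (i + (5*t+1)))"
      using suminf_split_initial_segment[OF usm[of t "5*t+1"], of 5] by simp
    also have "(\<Sum>k. u t (k + 5 + (5*t+1))) = T t"
      unfolding T_def by (simp add: algebra_simps)
    also have "(\<Sum>i<5. u t (i + (5*t+1))) = u t (5*t+1) + u t (5*t+2) + u t (5*t+3) + u t (5*t+4) + u t (5*t+5)"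
      by (simp add: eval_nat_numeral add.commute add.left_commute)
    finally show ?thesis unfolding E_def by (simp add: algebra_simps)
  qed
  have pascal: "u (Suc t) (Suc k) = u t (Suc k) - y * u t k" for t k
  proof -
    have "real (Suc t) + 1/5 = (real t + 1/5) + 1" by simp
    then have "(real (Suc t) + 1/5) gchoose Suc k = ((real t + 1/5) gchoose k) + ((real t + 1/5) gchoose Suc k)"
      using gbinomial_Suc_Suc[of "real t + 1/5" k] by simp
    then show ?thesis by (simp add: u_def algebra_simps)
  qed
  have T_rel: "(\<Sum>k. u (Suc t) (k + (5*Suc t+1))) = (1-y) * T t - y * u t (5*t+5)" for t
  proof -
    have "(\<Sum>k. u (Suc t) (k + (5*Suc t+1))) = (\<Sum>k. u t (k + (5*t+6)) - y * u t (k + (5*t+5)))"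
    proof -
      have "\<And>k. k + (5*Suc t+1) = Suc (k + (5*t+5))" by simp
      then show ?thesis by (simp only: pascal) (simp add: algebra_simps)
    qed
    also have "\<dots> = T t - y * (\<Sum>k. u t (k + (5*t+5)))"
    proof -
      have "(\<Sum>k. u t (k + (5*t+6)) - y * u t (k + (5*t+5))) = (\<Sum>k. u t (k + (5*t+6))) - (\<Sum>k. y * u t (k + (5*t+5)))"
        by (rule suminf_diff[symmetric]) (use usum[of t] in \<open>auto intro!: summable_mult simp: sums_iff\<close>)
      also have "(\<Sum>k. y * u t (k + (5*t+5))) = y * (\<Sum>k. u t (k + (5*t+5)))"
        by (rule suminf_mult[OF usm])
      finally show ?thesis unfolding T_def .
    qed
    also have "(\<Sum>k. u t (k + (5*t+5))) = u t (5*t+5) + T t"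
      using suminf_split_head[OF usm[of t "5*t+5"]] unfolding T_def by (simp add: algebra_simps)
    finally show ?thesis by (simp add: algebra_simps)
  qed
  have step: "E t = S t + E (Suc t)" for t
  proof -
    have E1: "E (Suc t) = q^t * T t - q^(Suc t) * y * u t (5*t+5)"
    proof -
      have "E (Suc t) = q^(Suc t) * ((1-y) * T t - y * u t (5*t+5))" unfolding E_def T_rel ..
      also have "\<dots> = q^t * (q*(1-y)) * T t - q^(Suc t) * y * u t (5*t+5)" by (simp add: algebra_simps)
      finally show ?thesis using q1 by simp
    qed
    have S1: "S t = q^t * (u t (5*t+1) + u t (5*t+2) + u t (5*t+3) + u t (5*t+4)) + q^(Suc t) * u t (5*t+5)"
      unfolding S_def using link_j[of 1 t] link_j[of 2 t] link_j[of 3 t] link_j[of 4 t] link_0[of t]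
      by (simp add: algebra_simps)
    have "q^(Suc t) * u t (5*t+5) - q^(Suc t) * y * u t (5*t+5) = q^t * (q*(1-y)) * u t (5*t+5)"
      by (simp add: algebra_simps)
    then have "q^(Suc t) * u t (5*t+5) - q^(Suc t) * y * u t (5*t+5) = q^t * u t (5*t+5)" using q1 by simp
    then show ?thesis unfolding E1 S1 E_split[of t] by (simp add: algebra_simps)
  qed
  have tele: "(\<Sum>t<N. S t) = E 0 - E N" for N
  proof (induction N)
    case 0 then show ?case by simp
  next
    case (Suc N)
    have "(\<Sum>t<Suc N. S t) = (E 0 - E N) + S N" using Suc by simp
    also have "\<dots> = E 0 - E (Suc N)" using step[of N] by simp
    finally show ?case .
  qed
  have Ebound: "\<bar>E N\<bar> \<le> y / (1-y) * (1/a^4)^N" for N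
  proof -
    let ?c = "5*N+1"
    have g: "(\<lambda>k. y^?c * y^k) sums (y^?c * (1/(1-y)))"
      using geometric_sums[of y] y0 y1 by (intro sums_mult) simp
    have gb: "\<bar>u N (k + ?c)\<bar> \<le> y^?c * y^k" for k
      using ubound[of N "k + ?c"] by (simp add: power_add mult_ac)
    have sa: "summable (\<lambda>k. \<bar>u N (k + ?c)\<bar>)"
      using gb g by (intro summable_rabs_comparison_test[where g="\<lambda>k. y^?c * y^k"]) (auto simp: sums_iff)
    have "\<bar>\<Sum>k. u N (k + ?c)\<bar> \<le> (\<Sum>k. \<bar>u N (k + ?c)\<bar>)" by (rule summable_rabs[OF sa])
    also have "\<dots> \<le> (\<Sum>k. y^?c * y^k)" using sa g gb by (intro suminf_le) (auto simp: sums_iff)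
    also have "\<dots> = y^?c / (1-y)" using g by (simp add: sums_iff)
    finally have s: "\<bar>\<Sum>k. u N (k + ?c)\<bar> \<le> y^?c / (1-y)" .
    have qp: "0 \<le> q^N" using y1 by (simp add: q_def)
    have "\<bar>E N\<bar> = q^N * \<bar>\<Sum>k. u N (k + ?c)\<bar>" unfolding E_def using qp by (simp add: abs_mult)
    also have "\<dots> \<le> q^N * (y^?c / (1-y))" using s qp by (rule mult_left_mono)
    also have "\<dots> = y/(1-y) * (q*y^5)^N" by (simp add: power_mult_distrib power_add power_mult)
    also have "\<dots> = y/(1-y) * (1/a^4)^N" by (simp add: b_eq)
    finally show ?thesis .
  qed
  have E_lim: "E \<longlonglongrightarrow> 0"
  proof (rule Lim_null_comparison)
    show "\<forall>\<^sub>F N in sequentially. norm (E N) \<le> y / (1-y) * (1/a^4)^N" using Ebound by simp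
    have "1 < a^4" using a by (metis one_less_power power_abs power_even_abs_numeral even_numeral zero_less_numeral)
    then have "norm (1/a^4) < 1" by (simp add: divide_less_eq)
    then have "(\<lambda>N. (1/a^4)^N) \<longlonglongrightarrow> 0" by (rule LIMSEQ_power_zero)
    then show "(\<lambda>N. y / (1-y) * (1/a^4)^N) \<longlonglongrightarrow> 0" by (rule tendsto_mult_right_zero)
  qed
  have E0: "E 0 = (1-y) powr (1/5) - 1"
  proof -
    have u00: "u 0 0 = 1" by (simp add: u_def)
    have "summable (u 0)" using usum[of 0] by (simp add: sums_iff)
    from suminf_split_head[OF this] have "(\<Sum>k. u 0 (Suc k)) = suminf (u 0) - u 0 0" .
    then show ?thesis using usum[of 0] u00 by (simp add: E_def sums_iff)
  qed
  have "(\<lambda>N. (\<Sum>t<N. S t)) \<longlonglongrightarrow> E 0 - 0"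
    unfolding tele by (intro tendsto_diff tendsto_const E_lim)
  then have "S sums E 0" by (simp add: sums_def)
  then show ?thesis unfolding E0 S_def .
qed

theorem mainTheorem2:
  fixes a x :: real
  assumes ha: "\<bar>a\<bar> > 1"
    and hx: "x^5 + x = a"
  shows "summable (\<lambda>m. K0_term a (m+1))
       \<and> (\<forall>j\<in>{1,2,3,4::nat}. summable (\<lambda>m. Kj_term a j (m+1)))
       \<and> (let y = x / a;
              K0 = 1 + (\<Sum>m. K0_term a (m+1));
              K1 = - (\<bar>a\<bar> powr (4/5)) + (\<Sum>m. Kj_term a 1 (m+1));
              K2 = (\<Sum>m. Kj_term a 2 (m+1));
              K3 = (\<Sum>m. Kj_term a 3 (m+1));
              K4 = (\<Sum>m. Kj_term a 4 (m+1))
          in K4 * y^4 + K3 * y^3 + K2 * y^2 + K1 * y + K0 = 0)"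
proof -
  have a0: "a \<noteq> 0" using ha by auto
  define y where "y = x / a"
  have x5: "x^5 = x * (x^2)^2" by algebra
  have y01: "0 < y \<and> y < 1"
  proof (cases "a > 1")
    case True
    have xp: "x > 0"
    proof (rule ccontr)
      assume "\<not> x > 0"
      then have xl: "x \<le> 0" by simp
      then have "x * (x^2)^2 \<le> 0" by (simp add: mult_nonpos_nonneg)
      then show False using hx x5 True xl by linarith
    qed
    then have "x * (x^2)^2 > 0" by simp
    then have "x < a" using hx x5 by linarith
    then show ?thesis using xp True by (simp add: y_def divide_less_eq)
  next
    case False
    then have an: "a < -1" using ha by auto
    have xn: "x < 0"
    proof (rule ccontr)
      assume "\<not> x < 0"
      then have xl: "x \<ge> 0" by simp
      then have "x * (x^2)^2 \<ge> 0" by simp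
      then show False using hx x5 an xl by linarith
    qed
    then have "x * (x^2)^2 < 0" by (simp add: mult_neg_pos)
    then have "a < x" using hx x5 by linarith
    then show ?thesis using xn an by (simp add: y_def divide_less_eq zero_less_divide_iff)
  qed
  then have y0: "0 < y" and y1: "y < 1" by auto
  have yb: "y^5 = (1/a^4)*(1-y)"
  proof -
    have "(1/a^4)*(1-y) = (a-x)/a^5" using a0 by (simp add: y_def field_simps) (simp add: eval_nat_numeral)
    also have "a - x = x^5" using hx by simp
    also have "x^5/a^5 = y^5" by (simp add: y_def power_divide)
    finally show ?thesis by simp
  qed
  define A where "A = \<bar>a\<bar> powr (4/5)"
  have A0: "0 < A" using a0 by (simp add: A_def)
  have A5: "A^5 = a^4"
  proof -
    have "A^5 = \<bar>a\<bar> powr (of_nat 5 * (4/5))" unfolding A_def by (rule powr_power) (use a0 in simp)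
    also have "\<dots> = \<bar>a\<bar> powr 4" by simp
    also have "\<dots> = \<bar>a\<bar>^4" by simp
    also have "\<dots> = a^4" by (simp add: power_even_abs_numeral)
    finally show ?thesis .
  qed
  have Ay: "A * y = (1-y) powr (1/5)"
  proof -
    have "(A*y)^5 = 1 - y" using A5 yb a0 by (simp add: power_mult_distrib field_simps)
    then have "(1-y) powr (1/5) = ((A*y)^5) powr (1/5)" by simp
    also have "\<dots> = ((A*y) powr 5) powr (1/5)" using A0 y0 by simp
    also have "\<dots> = A*y" by (simp add: powr_powr) (use A0 y0 in simp)
    finally show ?thesis by simp
  qed
  have sK0: "summable (\<lambda>m. K0_term a (Suc m))" by (rule summable_K0[OF ha])
  have sKj: "summable (\<lambda>m. Kj_term a j (Suc m))" if "1 \<le> j" for j by (rule summable_Kj[OF that ha])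
  define k0 where "k0 = (\<Sum>m. K0_term a (Suc m))"
  define kk where "kk j = (\<Sum>m. Kj_term a j (Suc m))" for j
  have S1: "(\<lambda>m. K0_term a (Suc m)) sums k0" using sK0 by (simp add: k0_def summable_sums)
  have S2: "(\<lambda>m. y^j * Kj_term a j (Suc m)) sums (y^j * kk j)" if "1 \<le> j" for j
    using sKj[OF that] by (intro sums_mult) (simp add: kk_def summable_sums)
  have "(\<lambda>t. y * Kj_term a 1 (Suc t) + y^2 * Kj_term a 2 (Suc t) + y^3 * Kj_term a 3 (Suc t)
              + y^4 * Kj_term a 4 (Suc t) + K0_term a (Suc t)) sums (y^1 * kk 1 + y^2 * kk 2 + y^3 * kk 3 + y^4 * kk 4 + k0)"
    using S2[of 1] S2[of 2] S2[of 3] S2[of 4] S1 by (intro sums_add) auto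
  moreover have "(\<lambda>t. y * Kj_term a 1 (Suc t) + y^2 * Kj_term a 2 (Suc t) + y^3 * Kj_term a 3 (Suc t)
              + y^4 * Kj_term a 4 (Suc t) + K0_term a (Suc t)) sums ((1-y) powr (1/5) - 1)"
    by (rule telescope[OF ha y0 y1 yb])
  ultimately have eq: "y * kk 1 + y^2 * kk 2 + y^3 * kk 3 + y^4 * kk 4 + k0 = (1-y) powr (1/5) - 1"
    by (simp add: sums_unique2)
  have main: "kk 4 * y^4 + kk 3 * y^3 + kk 2 * y^2 + (- A + kk 1) * y + (1 + k0) = 0"
    using eq Ay by (simp add: algebra_simps)
  show ?thesis
    using sK0 sKj main by (simp add: Let_def y_def[symmetric] A_def[symmetric] k0_def kk_def)
qed

end
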